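(* Let $D_\ast,E_\ast$ be chain complexes, $j$ an integer and $\varphi:D_\ast\to E_\ast$ a chain homotopy equivalence such that $\varphi_i:D_i\to E_i$ is an isomorphism for all $i\leq j-1$. Then there is a chain homotopy inverse $\psi:E_\ast\to D_\ast$ of $\varphi$ with $\psi_i=\varphi_i^{-1}$ for all $i\leq j-1$. *)

theory Defs
  imports Main
begin

text \<open>A module is represented as a
carrier set M inside an ambient abelian group 'a, with scalar action s. Maps are only constrained on carriers.\<close>

definition module_on :: "('r::ring_1 \<Rightarrow> 'a::ab_group_add \<Rightarrow> 'a) \<Rightarrow> 'a set \<Rightarrow> bool" where
  "module_on s M \<longleftrightarrow> 0 \<in> M \<and> (\<forall>x\<in>M. \<forall>y\<in>M. x + y \<in> M) \<and> (\<forall>x\<in>M. - x \<in> M)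
     \<and> (\<forall>r. \<forall>x\<in>M. s r x \<in> M)
     \<and> (\<forall>r. \<forall>x\<in>M. \<forall>y\<in>M. s r (x + y) = s r x + s r y)
     \<and> (\<forall>r r'. \<forall>x\<in>M. s (r + r') x = s r x + s r' x)
     \<and> (\<forall>r r'. \<forall>x\<in>M. s (r * r') x = s r (s r' x))
     \<and> (\<forall>x\<in>M. s 1 x = x)"

definition linear_on :: "('r::ring_1 \<Rightarrow> 'a::ab_group_add \<Rightarrow> 'a) \<Rightarrow> 'a set \<Rightarrow>
    ('r \<Rightarrow> 'b::ab_group_add \<Rightarrow> 'b) \<Rightarrow> 'b set \<Rightarrow> ('a \<Rightarrow> 'b) \<Rightarrow> bool" where
  "linear_on s M t N f \<longleftrightarrow> (\<forall>x\<in>M. f x \<in> N) \<and> (\<forall>x\<in>M. \<forall>y\<in>M. f (x + y) = f x + f y)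
     \<and> (\<forall>r. \<forall>x\<in>M. f (s r x) = t r (f x))"

definition chain_complex :: "('r::ring_1 \<Rightarrow> 'a::ab_group_add \<Rightarrow> 'a) \<Rightarrow> (int \<Rightarrow> 'a set) \<Rightarrow>
    (int \<Rightarrow> 'a \<Rightarrow> 'a) \<Rightarrow> bool" where
  "chain_complex s C d \<longleftrightarrow> (\<forall>i. module_on s (C i))
     \<and> (\<forall>i. linear_on s (C i) s (C (i - 1)) (d i))
     \<and> (\<forall>i. \<forall>x\<in>C i. d (i - 1) (d i x) = 0)"

definition chain_map :: "('r::ring_1 \<Rightarrow> 'a::ab_group_add \<Rightarrow> 'a) \<Rightarrow> (int \<Rightarrow> 'a set) \<Rightarrow> (int \<Rightarrow> 'a \<Rightarrow> 'a) \<Rightarrow>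
    ('r \<Rightarrow> 'b::ab_group_add \<Rightarrow> 'b) \<Rightarrow> (int \<Rightarrow> 'b set) \<Rightarrow> (int \<Rightarrow> 'b \<Rightarrow> 'b) \<Rightarrow>
    (int \<Rightarrow> 'a \<Rightarrow> 'b) \<Rightarrow> bool" where
  "chain_map s C d t E e f \<longleftrightarrow> (\<forall>i. linear_on s (C i) t (E i) (f i))
     \<and> (\<forall>i. \<forall>x\<in>C i. e i (f i x) = f (i - 1) (d i x))"

definition chain_homotopic :: "('r::ring_1 \<Rightarrow> 'a::ab_group_add \<Rightarrow> 'a) \<Rightarrow> (int \<Rightarrow> 'a set) \<Rightarrow> (int \<Rightarrow> 'a \<Rightarrow> 'a) \<Rightarrow>
    ('r \<Rightarrow> 'b::ab_group_add \<Rightarrow> 'b) \<Rightarrow> (int \<Rightarrow> 'b set) \<Rightarrow> (int \<Rightarrow> 'b \<Rightarrow> 'b) \<Rightarrow>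
    (int \<Rightarrow> 'a \<Rightarrow> 'b) \<Rightarrow> (int \<Rightarrow> 'a \<Rightarrow> 'b) \<Rightarrow> bool" where
  "chain_homotopic s C d t E e f g \<longleftrightarrow> (\<exists>h. (\<forall>i. linear_on s (C i) t (E (i + 1)) (h i))
     \<and> (\<forall>i. \<forall>x\<in>C i. f i x - g i x = e (i + 1) (h i x) + h (i - 1) (d i x)))"

definition chain_homotopy_inverse :: "('r::ring_1 \<Rightarrow> 'a::ab_group_add \<Rightarrow> 'a) \<Rightarrow> (int \<Rightarrow> 'a set) \<Rightarrow> (int \<Rightarrow> 'a \<Rightarrow> 'a) \<Rightarrow>
    ('r \<Rightarrow> 'b::ab_group_add \<Rightarrow> 'b) \<Rightarrow> (int \<Rightarrow> 'b set) \<Rightarrow> (int \<Rightarrow> 'b \<Rightarrow> 'b) \<Rightarrow>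
    (int \<Rightarrow> 'a \<Rightarrow> 'b) \<Rightarrow> (int \<Rightarrow> 'b \<Rightarrow> 'a) \<Rightarrow> bool" where
  "chain_homotopy_inverse s C d t E e \<phi> \<psi> \<longleftrightarrow>
     chain_map s C d t E e \<phi> \<and> chain_map t E e s C d \<psi>
     \<and> chain_homotopic s C d s C d (\<lambda>i x. \<psi> i (\<phi> i x)) (\<lambda>i x. x)
     \<and> chain_homotopic t E e t E e (\<lambda>i y. \<phi> i (\<psi> i y)) (\<lambda>i y. y)"

definition chain_homotopy_equivalence :: "('r::ring_1 \<Rightarrow> 'a::ab_group_add \<Rightarrow> 'a) \<Rightarrow> (int \<Rightarrow> 'a set) \<Rightarrow> (int \<Rightarrow> 'a \<Rightarrow> 'a) \<Rightarrow>
    ('r \<Rightarrow> 'b::ab_group_add \<Rightarrow> 'b) \<Rightarrow> (int \<Rightarrow> 'b set) \<Rightarrow> (int \<Rightarrow> 'b \<Rightarrow> 'b) \<Rightarrow>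
    (int \<Rightarrow> 'a \<Rightarrow> 'b) \<Rightarrow> bool" where
  "chain_homotopy_equivalence s C d t E e \<phi> \<longleftrightarrow> (\<exists>\<psi>. chain_homotopy_inverse s C d t E e \<phi> \<psi>)"

end

theory Submission
  imports Defs
begin

lemma mod_zero: "module_on s M \<Longrightarrow> s r 0 = 0"
proof -
  assume m: "module_on s M"
  then have "s r (0 + 0) = s r 0 + s r 0" unfolding module_on_def by blast
  then show ?thesis by simp
qed

lemma mod_neg: "module_on s M \<Longrightarrow> x \<in> M \<Longrightarrow> s r (- x) = - s r x"
proof -
  assume m: "module_on s M" and x: "x \<in> M"
  then have "s r (x + - x) = s r x + s r (- x)" unfolding module_on_def by blast
  then show ?thesis using mod_zero[OF m, of r] by (metis add.right_inverse neg_eq_iff_add_eq_0)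
qed

lemma mod_diff_mem: "module_on s M \<Longrightarrow> x \<in> M \<Longrightarrow> y \<in> M \<Longrightarrow> x - y \<in> M"
  unfolding module_on_def by (metis diff_conv_add_uminus)

lemma mod_add_mem: "module_on s M \<Longrightarrow> x \<in> M \<Longrightarrow> y \<in> M \<Longrightarrow> x + y \<in> M"
  unfolding module_on_def by blast

lemma mod_diff: "module_on s M \<Longrightarrow> x \<in> M \<Longrightarrow> y \<in> M \<Longrightarrow> s r (x - y) = s r x - s r y"
proof -
  assume m: "module_on s M" and x: "x \<in> M" and y: "y \<in> M"
  then have "-y \<in> M" unfolding module_on_def by blast
  then have "s r (x + - y) = s r x + s r (- y)" using m x unfolding module_on_def by blast
  then show ?thesis using mod_neg[OF m y] by simp
qed

lemma lin_mem: "linear_on s M t N f \<Longrightarrow> x \<in> M \<Longrightarrow> f x \<in> N"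
  unfolding linear_on_def by blast

lemma lin_add: "linear_on s M t N f \<Longrightarrow> x \<in> M \<Longrightarrow> y \<in> M \<Longrightarrow> f (x + y) = f x + f y"
  unfolding linear_on_def by blast

lemma lin_zero: "linear_on s M t N f \<Longrightarrow> module_on s M \<Longrightarrow> f 0 = 0"
proof -
  assume l: "linear_on s M t N f" and m: "module_on s M"
  then have "f (0 + 0) = f 0 + f 0" using lin_add[OF l] unfolding module_on_def by blast
  then show ?thesis by simp
qed

lemma lin_diff: "linear_on s M t N f \<Longrightarrow> module_on s M \<Longrightarrow> x \<in> M \<Longrightarrow> y \<in> M
   \<Longrightarrow> f (x - y) = f x - f y"
proof -
  assume l: "linear_on s M t N f" and m: "module_on s M" and x: "x \<in> M" and y: "y \<in> M"
  have "x - y \<in> M" using mod_diff_mem[OF m x y] .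
  then have "f (x - y + y) = f (x - y) + f y" using lin_add[OF l _ y] by blast
  then show ?thesis by (simp add: algebra_simps)
qed

lemma lin_comp: "linear_on s M t N f \<Longrightarrow> linear_on t N u P g \<Longrightarrow> linear_on s M u P (\<lambda>x. g (f x))"
  unfolding linear_on_def by auto

lemma lin_diff_fun: "linear_on s M t N f \<Longrightarrow> linear_on s M t N g \<Longrightarrow> module_on t N
   \<Longrightarrow> linear_on s M t N (\<lambda>x. f x - g x)"
  unfolding linear_on_def
  by (auto simp: mod_diff mod_diff_mem algebra_simps)

lemma lin_zero_fun: "module_on t N \<Longrightarrow> linear_on s M t N (\<lambda>x. 0)"
  unfolding linear_on_def using mod_zero by (auto simp: module_on_def)

lemma lin_inv: "linear_on s M t N f \<Longrightarrow> bij_betw f M N \<Longrightarrow> module_on s M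
   \<Longrightarrow> linear_on t N s M (the_inv_into M f)"
proof -
  assume l: "linear_on s M t N f" and b: "bij_betw f M N" and m: "module_on s M"
  have inj: "inj_on f M" using b bij_betw_def by blast
  have iM: "\<And>y. y \<in> N \<Longrightarrow> the_inv_into M f y \<in> M"
    using b by (metis bij_betw_def the_inv_into_into order_refl)
  have fi: "\<And>y. y \<in> N \<Longrightarrow> f (the_inv_into M f y) = y"
    using b f_the_inv_into_f_bij_betw by metis
  have if': "\<And>x. x \<in> M \<Longrightarrow> the_inv_into M f (f x) = x"
    using inj the_inv_into_f_f by metis
  show ?thesis unfolding linear_on_def
  proof (intro conjI ballI allI)
    fix y assume "y \<in> N" then show "the_inv_into M f y \<in> M" by (rule iM)
  next
    fix x y assume x: "x \<in> N" and y: "y \<in> N"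
    have s: "the_inv_into M f x + the_inv_into M f y \<in> M" using mod_add_mem[OF m iM[OF x] iM[OF y]] .
    have "f (the_inv_into M f x + the_inv_into M f y) = x + y"
      using lin_add[OF l iM[OF x] iM[OF y]] fi x y by simp
    then show "the_inv_into M f (x + y) = the_inv_into M f x + the_inv_into M f y"
      using if'[OF s] by simp
  next
    fix r x assume x: "x \<in> N"
    have s: "s r (the_inv_into M f x) \<in> M" using m iM[OF x] unfolding module_on_def by blast
    have "f (s r (the_inv_into M f x)) = t r x"
      using l iM[OF x] fi[OF x] unfolding linear_on_def by metis
    then show "the_inv_into M f (t r x) = s r (the_inv_into M f x)"
      using if'[OF s] by simp
  qed
qed

theorem lemma6p5:
  fixes s :: "'r::ring_1 \<Rightarrow> 'a::ab_group_add \<Rightarrow> 'a" and D :: "int \<Rightarrow> 'a set" and dD :: "int \<Rightarrow> 'a \<Rightarrow> 'a"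
    and t :: "'r \<Rightarrow> 'b::ab_group_add \<Rightarrow> 'b" and E :: "int \<Rightarrow> 'b set" and dE :: "int \<Rightarrow> 'b \<Rightarrow> 'b"
    and \<phi> :: "int \<Rightarrow> 'a \<Rightarrow> 'b" and j :: int
  assumes "chain_complex s D dD" and "chain_complex t E dE"
    and "chain_homotopy_equivalence s D dD t E dE \<phi>"
    and "\<forall>i \<le> j - 1. bij_betw (\<phi> i) (D i) (E i)"
  shows "\<exists>\<psi>. chain_homotopy_inverse s D dD t E dE \<phi> \<psi>
           \<and> (\<forall>i \<le> j - 1. \<forall>y\<in>E i. \<psi> i y = the_inv_into (D i) (\<phi> i) y)"
proof -
  have mD: "\<And>i. module_on s (D i)" and lD: "\<And>i. linear_on s (D i) s (D (i - 1)) (dD i)"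
    and ddD: "\<And>i x. x \<in> D i \<Longrightarrow> dD (i - 1) (dD i x) = 0"
    using assms(1) unfolding chain_complex_def by auto
  have mE: "\<And>i. module_on t (E i)" and lE: "\<And>i. linear_on t (E i) t (E (i - 1)) (dE i)"
    and ddE: "\<And>i x. x \<in> E i \<Longrightarrow> dE (i - 1) (dE i x) = 0"
    using assms(2) unfolding chain_complex_def by auto
  have lD': "\<And>i. linear_on s (D (i + 1)) s (D i) (dD (i + 1))" using lD by (metis add_diff_cancel_right')
  have lE': "\<And>i. linear_on t (E (i + 1)) t (E i) (dE (i + 1))" using lE by (metis add_diff_cancel_right')
  obtain g where cmphi: "chain_map s D dD t E dE \<phi>" and cmg: "chain_map t E dE s D dD g"
    and hh: "chain_homotopic s D dD s D dD (\<lambda>i x. g i (\<phi> i x)) (\<lambda>i x. x)"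
    and hk: "chain_homotopic t E dE t E dE (\<lambda>i y. \<phi> i (g i y)) (\<lambda>i y. y)"
    using assms(3) unfolding chain_homotopy_equivalence_def chain_homotopy_inverse_def by blast
  have lphi: "\<And>i. linear_on s (D i) t (E i) (\<phi> i)" and cphi: "\<And>i x. x \<in> D i \<Longrightarrow> dE i (\<phi> i x) = \<phi> (i - 1) (dD i x)"
    using cmphi unfolding chain_map_def by auto
  have lg: "\<And>i. linear_on t (E i) s (D i) (g i)" and cg: "\<And>i y. y \<in> E i \<Longrightarrow> dD i (g i y) = g (i - 1) (dE i y)"
    using cmg unfolding chain_map_def by auto
  obtain h where lh: "\<And>i. linear_on s (D i) s (D (i + 1)) (h i)"
    and eh: "\<And>i x. x \<in> D i \<Longrightarrow> g i (\<phi> i x) - x = dD (i + 1) (h i x) + h (i - 1) (dD i x)"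
    using hh unfolding chain_homotopic_def by blast
  obtain k where lk: "\<And>i. linear_on t (E i) t (E (i + 1)) (k i)"
    and ek: "\<And>i y. y \<in> E i \<Longrightarrow> \<phi> i (g i y) - y = dE (i + 1) (k i y) + k (i - 1) (dE i y)"
    using hk unfolding chain_homotopic_def by blast
  define inv where "inv i = the_inv_into (D i) (\<phi> i)" for i
  have bij: "\<And>i. i \<le> j - 1 \<Longrightarrow> bij_betw (\<phi> i) (D i) (E i)" using assms(4) by blast
  have linv: "\<And>i. i \<le> j - 1 \<Longrightarrow> linear_on t (E i) s (D i) (inv i)"
    unfolding inv_def using lin_inv lphi bij mD by blast
  have iM: "\<And>i y. i \<le> j - 1 \<Longrightarrow> y \<in> E i \<Longrightarrow> inv i y \<in> D i"
    using linv lin_mem by blast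
  have fi: "\<And>i y. i \<le> j - 1 \<Longrightarrow> y \<in> E i \<Longrightarrow> \<phi> i (inv i y) = y"
    unfolding inv_def using bij f_the_inv_into_f_bij_betw by metis
  have if': "\<And>i x. i \<le> j - 1 \<Longrightarrow> x \<in> D i \<Longrightarrow> inv i (\<phi> i x) = x"
    unfolding inv_def using bij the_inv_into_f_f bij_betw_def by metis
  have cinv: "\<And>i y. i \<le> j - 1 \<Longrightarrow> y \<in> E i \<Longrightarrow> dD i (inv i y) = inv (i - 1) (dE i y)"
  proof -
    fix i y assume i: "i \<le> j - 1" and y: "y \<in> E i"
    have m: "dD i (inv i y) \<in> D (i - 1)" using lin_mem[OF lD iM[OF i y]] .
    have "\<phi> (i - 1) (dD i (inv i y)) = dE i y" using cphi[OF iM[OF i y]] fi[OF i y] by simp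
    then show "dD i (inv i y) = inv (i - 1) (dE i y)" using if'[of "i - 1", OF _ m] i by simp
  qed
  define H where "H i y = (if i \<le> j - 1 then h i (inv i y) else 0)" for i y
  have lH: "\<And>i. linear_on t (E i) s (D (i + 1)) (H i)"
  proof -
    fix i
    show "linear_on t (E i) s (D (i + 1)) (H i)"
    proof (cases "i \<le> j - 1")
      case True
      then show ?thesis unfolding H_def using lin_comp[OF linv[OF True] lh] by simp
    next
      case False
      then show ?thesis unfolding H_def using lin_zero_fun[OF mD] by simp
    qed
  qed
  have lH': "\<And>i. linear_on t (E (i - 1)) s (D i) (H (i - 1))" using lH by (metis diff_add_cancel)
  define \<psi> where "\<psi> i y = g i y - dD (i + 1) (H i y) - H (i - 1) (dE i y)" for i y
  have lpsi: "\<And>i. linear_on t (E i) s (D i) (\<psi> i)"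
  proof -
    fix i
    have a: "linear_on t (E i) s (D i) (\<lambda>y. dD (i + 1) (H i y))" using lin_comp[OF lH lD'] .
    have b: "linear_on t (E i) s (D i) (\<lambda>y. H (i - 1) (dE i y))" using lin_comp[OF lE lH'] .
    show "linear_on t (E i) s (D i) (\<psi> i)" unfolding \<psi>_def
      by (rule lin_diff_fun[OF lin_diff_fun[OF lg a mD] b mD])
  qed
  have Hm: "\<And>i y. y \<in> E i \<Longrightarrow> H i y \<in> D (i + 1)" using lH lin_mem by blast
  have Hz: "\<And>i. H i 0 = 0" using lH lin_zero mE by blast
  have cpsi: "\<And>i y. y \<in> E i \<Longrightarrow> dD i (\<psi> i y) = \<psi> (i - 1) (dE i y)"
  proof -
    fix i y assume y: "y \<in> E i"
    have m1: "g i y \<in> D i" using lin_mem[OF lg y] .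
    have m2: "dD (i + 1) (H i y) \<in> D i" using lin_mem[OF lD' Hm[OF y]] .
    have m3: "H (i - 1) (dE i y) \<in> D i" using lin_mem[OF lH' lin_mem[OF lE y]] .
    have "dD i (\<psi> i y) = dD i (g i y) - dD i (dD (i + 1) (H i y)) - dD i (H (i - 1) (dE i y))"
      unfolding \<psi>_def using lin_diff[OF lD mD] m1 m2 m3 mod_diff_mem[OF mD m1 m2] by simp
    also have "dD i (dD (i + 1) (H i y)) = 0" using ddD[of "H i y" "i + 1"] Hm[OF y] by simp
    also have "dE (i - 1) (dE i y) = 0" using ddE[OF y] .
    ultimately show "dD i (\<psi> i y) = \<psi> (i - 1) (dE i y)"
      unfolding \<psi>_def using cg[OF y] Hz by simp
  qed
  have cmpsi: "chain_map t E dE s D dD \<psi>" unfolding chain_map_def using lpsi cpsi by blast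
  have psi_inv: "\<And>i y. i \<le> j - 1 \<Longrightarrow> y \<in> E i \<Longrightarrow> \<psi> i y = inv i y"
  proof -
    fix i y assume i: "i \<le> j - 1" and y: "y \<in> E i"
    have i1: "i - 1 \<le> j - 1" using i by simp
    have "g i y = g i (\<phi> i (inv i y))" using fi[OF i y] by simp
    also have "\<dots> = inv i y + dD (i + 1) (h i (inv i y)) + h (i - 1) (dD i (inv i y))"
      using eh[OF iM[OF i y]] by (simp add: algebra_simps)
    finally show "\<psi> i y = inv i y"
      unfolding \<psi>_def H_def using i i1 cinv[OF i y] by simp
  qed
  have ho1: "chain_homotopic s D dD s D dD (\<lambda>i x. \<psi> i (\<phi> i x)) (\<lambda>i x. x)"
    unfolding chain_homotopic_def
  proof (intro exI[of _ "\<lambda>i x. h i x - H i (\<phi> i x)"] conjI allI ballI)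
    fix i
    show "linear_on s (D i) s (D (i + 1)) (\<lambda>x. h i x - H i (\<phi> i x))"
      using lin_diff_fun[OF lh lin_comp[OF lphi lH] mD] .
  next
    fix i x assume x: "x \<in> D i"
    have px: "\<phi> i x \<in> E i" using lin_mem[OF lphi x] .
    have dx: "dD i x \<in> D (i - 1)" using lin_mem[OF lD x] .
    have a: "dD (i + 1) (h i x - H i (\<phi> i x)) = dD (i + 1) (h i x) - dD (i + 1) (H i (\<phi> i x))"
      using lin_diff[OF lD' mD lin_mem[OF lh x] Hm[OF px]] .
    show "\<psi> i (\<phi> i x) - x = dD (i + 1) (h i x - H i (\<phi> i x)) + (h (i - 1) (dD i x) - H (i - 1) (\<phi> (i - 1) (dD i x)))"
      unfolding a \<psi>_def using eh[OF x] cphi[OF x] by (simp add: algebra_simps)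
  qed
  have ho2: "chain_homotopic t E dE t E dE (\<lambda>i y. \<phi> i (\<psi> i y)) (\<lambda>i y. y)"
    unfolding chain_homotopic_def
  proof (intro exI[of _ "\<lambda>i y. k i y - \<phi> (i + 1) (H i y)"] conjI allI ballI)
    fix i
    show "linear_on t (E i) t (E (i + 1)) (\<lambda>y. k i y - \<phi> (i + 1) (H i y))"
      using lin_diff_fun[OF lk lin_comp[OF lH lphi] mE] .
  next
    fix i y assume y: "y \<in> E i"
    have dy: "dE i y \<in> E (i - 1)" using lin_mem[OF lE y] .
    have m1: "g i y \<in> D i" using lin_mem[OF lg y] .
    have m2: "dD (i + 1) (H i y) \<in> D i" using lin_mem[OF lD' Hm[OF y]] .
    have m3: "H (i - 1) (dE i y) \<in> D i" using lin_mem[OF lH' dy] .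
    have p: "\<phi> i (\<psi> i y) = \<phi> i (g i y) - \<phi> i (dD (i + 1) (H i y)) - \<phi> i (H (i - 1) (dE i y))"
      unfolding \<psi>_def using lin_diff[OF lphi mD] m1 m2 m3 mod_diff_mem[OF mD m1 m2] by simp
    have c1: "\<phi> i (dD (i + 1) (H i y)) = dE (i + 1) (\<phi> (i + 1) (H i y))"
      using cphi[OF Hm[OF y]] by simp
    have c2: "H (i - 1) (dE i y) \<in> D (i - 1 + 1)" using Hm[OF dy] .
    have a: "dE (i + 1) (k i y - \<phi> (i + 1) (H i y)) = dE (i + 1) (k i y) - dE (i + 1) (\<phi> (i + 1) (H i y))"
      using lin_diff[OF lE' mE lin_mem[OF lk y] lin_mem[OF lphi Hm[OF y]]] .
    show "\<phi> i (\<psi> i y) - y = dE (i + 1) (k i y - \<phi> (i + 1) (H i y)) + (k (i - 1) (dE i y) - \<phi> (i - 1 + 1) (H (i - 1) (dE i y)))"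
      unfolding a p c1 using ek[OF y] by (simp add: algebra_simps)
  qed
  show ?thesis
    apply (rule exI[of _ \<psi>])
    using cmphi cmpsi ho1 ho2 psi_inv unfolding chain_homotopy_inverse_def inv_def by blast
qed

end
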